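(* Let $r\ge 1$ and $n\ge 0$ be integers. Let $A(n,r)$ be the set of partitions of $n$ in which every part occurring with odd multiplicity has multiplicity at least $2r+1$, and let $C(n,r)$ be the set of partitions of $n$ in which every odd part is congruent to $2r+1 \pmod{4r+2}$. For a partition $\lambda=(\lambda_1^{m_1},\lambda_2^{m_2},\ldots)\in A(n,r)$ (multiplicity notation, distinct parts $\lambda_i$ with multiplicities $m_i\ge 1$), define $\beta_r(\lambda)=\bigcup_{i\ge1}\beta_r(\lambda_i^{m_i})$ (multiset union), where: If $\lambda_i$ is even: $\lambda_i^{m_i}\mapsto \lambda_i^{m_i-(2r+2v+2)},(2\lambda_i)^{r+v+1}$ if $m_i\equiv 2v+1 \pmod{2r+1}$ with $0\le v\le r-1$; and $\lambda_i^{m_i}\mapsto \lambda_i^{m_i-2v},(2\lambda_i)^{v}$ if $m_i\equiv 2v\pmod{2r+1}$ with $0\le v\le r$. If $\lambda_i$ is odd: $\lambda_i^{m_i}\mapsto ((2r+1)\lambda_i)^{\frac{m_i-(2r+2v+2)}{2r+1}},(2\lambda_i)^{r+v+1}$ if $m_i\equiv 2v+1\pmod{2r+1}$ with $0\le v\le r-1$; and $\lambda_i^{m_i}\mapsto ((2r+1)\lambda_i)^{\frac{m_i-2v}{2r+1}},(2\lambda_i)^{v}$ if $m_i\equiv 2v\pmod{2r+1}$ with $0\le v\le r$. Then $\beta_r$ is a well-defined bijection from $A(n,r)$ onto $C(n,r)$.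
   Context: A partition is written in multiplicity notation $(\lambda_1^{m_1},\lambda_2^{m_2},\ldots)$, meaning the part $\lambda_i$ appears $m_i$ times; a factor $x^0$ means the part $x$ does not appear. Partitions are regarded as multisets, and $\cup$ denotes multiset union. *)

theory Defs
  imports Main "HOL-Library.Multiset"
begin

definition partitions :: "nat \<Rightarrow> nat multiset set" where
  "partitions n = {p. (\<forall>x\<in>#p. 0 < x) \<and> sum_mset p = n}"

definition A_set :: "nat \<Rightarrow> nat \<Rightarrow> nat multiset set" where
  "A_set n r = {p \<in> partitions n. \<forall>x\<in>#p. odd (count p x) \<longrightarrow> 2*r+1 \<le> count p x}"

definition C_set :: "nat \<Rightarrow> nat \<Rightarrow> nat multiset set" where
  "C_set n r = {p \<in> partitions n. \<forall>x\<in>#p. odd x \<longrightarrow> x mod (4*r+2) = 2*r+1}"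

definition beta_block :: "nat \<Rightarrow> nat \<Rightarrow> nat \<Rightarrow> nat multiset" where
  "beta_block r x m =
     (let q = m mod (2*r+1) in
      if odd q then
        (let v = (q - 1) div 2 in
          (if even x then replicate_mset (m - (2*r+2*v+2)) x
           else replicate_mset ((m - (2*r+2*v+2)) div (2*r+1)) ((2*r+1)*x))
          + replicate_mset (r+v+1) (2*x))
      else
        (let v = q div 2 in
          (if even x then replicate_mset (m - 2*v) x
           else replicate_mset ((m - 2*v) div (2*r+1)) ((2*r+1)*x))
          + replicate_mset v (2*x)))"

definition beta :: "nat \<Rightarrow> nat multiset \<Rightarrow> nat multiset" where
  "beta r p = (\<Sum>x\<in>set_mset p. beta_block r x (count p x))"

text \<open>Well-definedness of the block formulas: the multiplicities prescribed are
  nonnegative integers (no truncation of natural subtraction / division).\<close>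
definition beta_well_defined :: "nat \<Rightarrow> nat multiset \<Rightarrow> bool" where
  "beta_well_defined r p =
     (\<forall>x\<in>#p. let m = count p x; q = m mod (2*r+1) in
        if odd q then
          (let v = (q - 1) div 2 in 2*r+2*v+2 \<le> m \<and>
             (odd x \<longrightarrow> (2*r+1) dvd (m - (2*r+2*v+2))))
        else
          (let v = q div 2 in 2*v \<le> m \<and> (odd x \<longrightarrow> (2*r+1) dvd (m - 2*v))))"

end

theory Submission
  imports Defs
begin

definition cc :: "nat \<Rightarrow> nat \<Rightarrow> nat" where
  "cc r m = (let q = m mod (2*r+1) in if odd q then r + (q - 1) div 2 + 1 else q div 2)"
definition ee :: "nat \<Rightarrow> nat \<Rightarrow> nat" where
  "ee r m = (let q = m mod (2*r+1) in if odd q then m - (2*r + 2*((q - 1) div 2) + 2) else m - 2*(q div 2))"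
definition valid :: "nat \<Rightarrow> nat \<Rightarrow> bool" where
  "valid r m = (even m \<or> 2*r+1 \<le> m)"

lemma cc0[simp]: "cc r 0 = 0" by (simp add: cc_def)
lemma ee0[simp]: "ee r 0 = 0" by (simp add: ee_def)

lemma block_eq: "beta_block r x m = (if even x then replicate_mset (ee r m) x
   else replicate_mset (ee r m div (2*r+1)) ((2*r+1)*x)) + replicate_mset (cc r m) (2*x)"
  by (simp add: beta_block_def cc_def ee_def Let_def)

lemma valid_props:
  assumes "valid r m"
  shows "m = ee r m + 2 * cc r m \<and> (2*r+1) dvd ee r m \<and> cc r m \<le> 2*r"
proof -
  define k where "k = 2*r+1"
  define q where "q = m mod k"
  define j where "j = m div k"
  have m: "m = k*j + q" unfolding q_def j_def by simp
  have qk: "q < k" unfolding q_def k_def by simp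
  show ?thesis
  proof (cases "odd q")
    case True
    have "j \<noteq> 0"
    proof
      assume "j = 0"
      then have "m = q" using m by simp
      then show False using assms True qk unfolding valid_def k_def by auto
    qed
    then obtain j' where j': "j = Suc j'" by (cases j) auto
    have q1: "2*((q - 1) div 2) = q - 1" using True by (simp add: odd_two_times_div_two_nat)
    have qpos: "q \<ge> 1" using True by (cases q) auto
    have qq: "m mod (2*r+1) = q" by (simp add: q_def k_def)
    have e: "ee r m = m - (k + q)" unfolding ee_def Let_def qq using True q1 qpos
      by (simp add: k_def)
    have c2: "2 * cc r m = k + q" unfolding cc_def Let_def qq using True q1 qpos
      by (simp add: k_def)
    have "m = k*j' + (k + q)" using m j' by simp
    then have e2: "ee r m = k*j'" using e by simp
    have "q \<noteq> 2*r" using True by auto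
    then have "q \<le> 2*r - 1" using qk k_def by simp
    then have "cc r m \<le> 2*r" using c2 k_def by simp
    moreover have "(2*r+1) dvd ee r m" unfolding e2 k_def by (rule dvd_triv_left)
    moreover have "m = ee r m + 2 * cc r m" using e2 c2 `m = k*j' + (k + q)` by simp
    ultimately show ?thesis by simp
  next
    case False
    have qq: "m mod (2*r+1) = q" by (simp add: q_def k_def)
    have e: "ee r m = m - q" unfolding ee_def Let_def qq using False
      by simp
    have c2: "2 * cc r m = q" unfolding cc_def Let_def qq using False
      by simp
    have e2: "ee r m = k*j" using e m by simp
    have "(2*r+1) dvd ee r m" unfolding e2 k_def by (rule dvd_triv_left)
    then show ?thesis using e2 c2 m qk k_def by auto
  qed
qed

lemma repr:
  assumes "c \<le> 2*r"
  shows "cc r ((2*r+1)*a + 2*c) = c \<and> ee r ((2*r+1)*a + 2*c) = (2*r+1)*a \<and> valid r ((2*r+1)*a + 2*c)"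
proof -
  define k where "k = 2*r+1"
  define m where "m = k*a + 2*c"
  have val: "valid r m"
  proof (cases "odd m")
    case True
    then have "odd a" unfolding m_def by simp
    then have "a \<ge> 1" by (cases a) auto
    then have "k*a \<ge> k" by simp
    then show ?thesis unfolding valid_def m_def k_def by simp
  qed (simp add: valid_def)
  show ?thesis
  proof (cases "c \<le> r")
    case True
    have "m mod k = (2*c) mod k" unfolding m_def by (metis add.commute mod_mult_self2 mult.commute)
    also have "\<dots> = 2*c" using True k_def by simp
    finally have "m mod k = 2*c" .
    then show ?thesis using val unfolding m_def k_def cc_def ee_def Let_def by simp
  next
    case False
    have m2: "m = k*(a+1) + (2*c - k)" unfolding m_def using False k_def by simp
    have "m mod k = (2*c - k) mod k" unfolding m2 by (metis add.commute mod_mult_self2 mult.commute)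
    also have "\<dots> = 2*c - k" using False assms k_def by simp
    finally have "m mod k = 2*c - k" .
    moreover have "odd (2*c - k)" using False k_def by simp
    moreover have "(2*c - k - 1) div 2 = c - r - 1" using False k_def by simp
    ultimately show ?thesis using val False unfolding m_def k_def cc_def ee_def Let_def by simp
  qed
qed

lemma kx_iff:
  fixes k x y :: nat
  assumes "odd k" "odd x"
  shows "(y = k*x) \<longleftrightarrow> (x = y div k \<and> k dvd y \<and> odd y)"
  using assms by auto

lemma twox_iff:
  fixes x y :: nat
  shows "(y = 2*x) \<longleftrightarrow> (x = y div 2 \<and> even y)"
  by auto

lemma odd_quot:
  fixes y :: nat
  assumes "(2*r+1) dvd y" "odd y"
  shows "odd (y div (2*r+1))"
proof -
  obtain t where t: "y = (2*r+1)*t" using assms(1) by (auto elim!: dvdE)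
  have "y div (2*r+1) = t" unfolding t by (rule nonzero_mult_div_cancel_left) simp
  then show ?thesis using assms(2) t by simp
qed

lemma count_block:
  "count (beta_block r x m) y =
     (if x = y \<and> even y then ee r m else 0)
   + (if x = y div (2*r+1) \<and> (2*r+1) dvd y \<and> odd y then ee r m div (2*r+1) else 0)
   + (if x = y div 2 \<and> even y then cc r m else 0)"
proof (cases "even x")
  case True
  have "(2*r+1) dvd y \<Longrightarrow> odd y \<Longrightarrow> x \<noteq> y div (2*r+1)" using odd_quot[of r y] True by auto
  then show ?thesis using True unfolding block_eq by (auto simp: count_replicate_mset)
next
  case False
  have k: "odd (2*r+1::nat)" by simp
  have "((2*r+1)*x = y) \<longleftrightarrow> (x = y div (2*r+1) \<and> (2*r+1) dvd y \<and> odd y)"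
    using kx_iff[OF k False, of y] by auto
  then show ?thesis using False unfolding block_eq by (auto simp: count_replicate_mset)
qed

lemma sum_delta_gen:
  fixes f :: "'a \<Rightarrow> nat"
  assumes "finite S" "\<And>x. x \<notin> S \<Longrightarrow> f x = 0"
  shows "(\<Sum>x\<in>S. if x = a \<and> P then f x else 0) = (if P then f a else 0)"
proof -
  have "(\<Sum>x\<in>S. if x = a \<and> P then f x else 0) = (\<Sum>x\<in>S. if x = a then (if P then f x else 0) else 0)"
    by (rule sum.cong) auto
  also have "\<dots> = (if a \<in> S then (if P then f a else 0) else 0)"
    using assms(1) by (simp add: sum.delta)
  also have "\<dots> = (if P then f a else 0)" using assms(2) by auto
  finally show ?thesis .
qed

lemma count_beta:
  "count (beta r p) y =
     (if even y then ee r (count p y) else 0)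
   + (if (2*r+1) dvd y \<and> odd y then ee r (count p (y div (2*r+1))) div (2*r+1) else 0)
   + (if even y then cc r (count p (y div 2)) else 0)"
proof -
  let ?S = "set_mset p"
  have fin: "finite ?S" by simp
  have "count (beta r p) y = (\<Sum>x\<in>?S. count (beta_block r x (count p x)) y)"
    unfolding beta_def by (simp add: count_sum)
  also have "\<dots> = (\<Sum>x\<in>?S. if x = y \<and> even y then ee r (count p x) else 0)
     + (\<Sum>x\<in>?S. if x = y div (2*r+1) \<and> ((2*r+1) dvd y \<and> odd y) then ee r (count p x) div (2*r+1) else 0)
     + (\<Sum>x\<in>?S. if x = y div 2 \<and> even y then cc r (count p x) else 0)"
    unfolding count_block sum.distrib by simp
  also have "\<dots> = (if even y then ee r (count p y) else 0)
   + (if (2*r+1) dvd y \<and> odd y then ee r (count p (y div (2*r+1))) div (2*r+1) else 0)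
   + (if even y then cc r (count p (y div 2)) else 0)"
    by (subst sum_delta_gen[OF fin], simp add: not_in_iff)+ (rule refl)
  finally show ?thesis .
qed

lemma sum_mset_sum_gen: "sum_mset (\<Sum>a\<in>A. f a) = (\<Sum>a\<in>A. sum_mset (f a))"
  by (induct A rule: infinite_finite_induct) simp_all

lemma mset_decomp: "p = (\<Sum>x\<in>set_mset p. replicate_mset (count p x) x)"
proof (rule multiset_eqI)
  fix y
  have "(\<Sum>x\<in>set_mset p. count (replicate_mset (count p x) x) y) = (\<Sum>x\<in>set_mset p. if x = y \<and> True then count p x else 0)"
    by (rule sum.cong) (auto simp: count_replicate_mset)
  also have "\<dots> = count p y" by (subst sum_delta_gen) (auto simp: not_in_iff)
  finally show "count p y = count (\<Sum>x\<in>set_mset p. replicate_mset (count p x) x) y"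
    by (simp add: count_sum)
qed

lemma sum_block:
  assumes "valid r m"
  shows "sum_mset (beta_block r x m) = x * m"
proof -
  have v: "m = ee r m + 2 * cc r m" "(2*r+1) dvd ee r m" using valid_props[OF assms] by auto
  show ?thesis
  proof (cases "even x")
    case True
    have "sum_mset (beta_block r x m) = ee r m * x + cc r m * (2*x)" unfolding block_eq using True by simp
    also have "\<dots> = x * (ee r m + 2*cc r m)" by (simp add: algebra_simps)
    also have "\<dots> = x*m" using v(1) by simp
    finally show ?thesis .
  next
    case False
    have "(2*r+1) * x * (ee r m div (2*r+1)) = x * ee r m" using v(2) by (metis dvd_mult_div_cancel mult.commute mult.left_commute)
    have "sum_mset (beta_block r x m) = (ee r m div (2*r+1)) * ((2*r+1)*x) + cc r m * (2*x)" unfolding block_eq using False by simp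
    also have "\<dots> = x * (ee r m + 2*cc r m)" using \<open>(2*r+1) * x * (ee r m div (2*r+1)) = x * ee r m\<close> by (simp add: algebra_simps)
    also have "\<dots> = x*m" using v(1) by simp
    finally show ?thesis .
  qed
qed

lemma sum_beta:
  assumes "\<And>x. valid r (count p x)"
  shows "sum_mset (beta r p) = sum_mset p"
proof -
  have "sum_mset (beta r p) = (\<Sum>x\<in>set_mset p. x * count p x)"
    unfolding beta_def sum_mset_sum_gen using sum_block[OF assms] by (simp add: mult.commute)
  also have "\<dots> = (\<Sum>x\<in>set_mset p. sum_mset (replicate_mset (count p x) x))" by (simp add: mult.commute)
  also have "\<dots> = sum_mset p" by (subst (2) mset_decomp) (simp add: sum_mset_sum_gen)
  finally show ?thesis .
qed


lemma A_valid:
  assumes "p \<in> A_set n r"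
  shows "valid r (count p x)"
proof (cases "x \<in># p")
  case True
  then show ?thesis using assms unfolding A_set_def valid_def by auto
next
  case False
  then show ?thesis by (simp add: valid_def not_in_iff)
qed

lemma A_zero: "p \<in> A_set n r \<Longrightarrow> count p 0 = 0"
  unfolding A_set_def partitions_def by (auto simp: not_in_iff[symmetric])

lemma wd_m:
  assumes "valid r m"
  shows "if odd (m mod (2*r+1)) then 2*r+2*((m mod (2*r+1) - 1) div 2)+2 \<le> m \<and> (odd x \<longrightarrow> (2*r+1) dvd (m - (2*r+2*((m mod (2*r+1) - 1) div 2)+2)))
     else 2*(m mod (2*r+1) div 2) \<le> m \<and> (odd x \<longrightarrow> (2*r+1) dvd (m - 2*(m mod (2*r+1) div 2)))"
proof -
  have v: "m = ee r m + 2 * cc r m" "(2*r+1) dvd ee r m" using valid_props[OF assms] by auto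
  show ?thesis
  proof (cases "odd (m mod (2*r+1))")
    case True
    have e: "ee r m = m - (2*r + 2*((m mod (2*r+1) - 1) div 2) + 2)" and c: "cc r m = r + (m mod (2*r+1) - 1) div 2 + 1"
      unfolding ee_def cc_def Let_def using True by auto
    have "2*r + 2*((m mod (2*r+1) - 1) div 2) + 2 \<le> m" using v(1) c by linarith
    then show ?thesis using True e v(2) by simp
  next
    case False
    have e: "ee r m = m - 2*(m mod (2*r+1) div 2)" and c: "cc r m = m mod (2*r+1) div 2"
      unfolding ee_def cc_def Let_def using False by auto
    have "2*(m mod (2*r+1) div 2) \<le> m" using v(1) c by linarith
    then show ?thesis using False e v(2) by simp
  qed
qed

lemma wd:
  assumes "\<And>x. valid r (count p x)"
  shows "beta_well_defined r p"
  unfolding beta_well_defined_def Let_def using wd_m[OF assms] by blast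

lemma into_C:
  assumes "p \<in> A_set n r"
  shows "beta r p \<in> C_set n r"
proof -
  have z: "count p 0 = 0" using A_zero[OF assms] .
  have c0: "count (beta r p) 0 = 0" unfolding count_beta using z by simp
  have sum: "sum_mset (beta r p) = n"
    using sum_beta[of r p] A_valid[OF assms] assms unfolding A_set_def partitions_def by auto
  have odd: "y mod (4*r+2) = 2*r+1" if "y \<in># beta r p" "odd y" for y
  proof -
    have "count (beta r p) y > 0" using that by simp
    then have "(2*r+1) dvd y" using that(2) unfolding count_beta by (auto split: if_splits)
    then obtain t where t: "y = (2*r+1)*t" by (auto elim!: dvdE)
    then have "odd t" using that(2) by simp
    then obtain u where u: "t = 2*u+1" by (metis oddE)
    have "y = (2*r+1) + u*(4*r+2)" unfolding t u by (simp add: algebra_simps)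
    then have "y mod (4*r+2) = (2*r+1) mod (4*r+2)" by (metis mod_mult_self1)
    then show ?thesis by simp
  qed
  have "\<forall>x\<in>#beta r p. 0 < x" using c0 by (metis gr0I not_in_iff)
  then show ?thesis unfolding C_set_def partitions_def using sum odd by auto
qed

lemma cc_lt: "valid r m \<Longrightarrow> cc r m < 2*r+1" using valid_props by fastforce

lemma inj_part:
  assumes "p \<in> A_set n r" "p' \<in> A_set n r" "beta r p = beta r p'"
  shows "p = p'"
proof (rule multiset_eqI)
  fix x
  define k where "k = 2*r+1"
  have vp: "\<And>x. valid r (count p x)" and vp': "\<And>x. valid r (count p' x)" using A_valid assms by blast+
  have ccmod: "cc r (count q x) = count (beta r q) (2*x) mod k" if "\<And>x. valid r (count q x)" for q x
  proof -
    have "count (beta r q) (2*x) = ee r (count q (2*x)) + cc r (count q x)" unfolding count_beta by simp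
    moreover have "k dvd ee r (count q (2*x))" using valid_props[OF that] k_def by blast
    moreover have "cc r (count q x) < k" using cc_lt[OF that] k_def by blast
    ultimately show ?thesis by (metis add.commute mod_less mod_mult_self2 dvd_def mult.commute)
  qed
  have ccq: "cc r (count p x) = cc r (count p' x)" for x using ccmod[OF vp] ccmod[OF vp'] assms(3) by metis
  have "ee r (count p x) = ee r (count p' x)"
  proof (cases "even x")
    case True
    have "count (beta r p) x = ee r (count p x) + cc r (count p (x div 2))"
         "count (beta r p') x = ee r (count p' x) + cc r (count p' (x div 2))"
      unfolding count_beta using True by simp_all
    then show ?thesis using ccq[of "x div 2"] assms(3) by simp
  next
    case False
    have dv: "k dvd k*x" "odd (k*x)" "k*x div k = x"
      by (rule dvd_triv_left) (simp add: k_def False, rule nonzero_mult_div_cancel_left, simp add: k_def)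
    have "count (beta r p) (k*x) = ee r (count p x) div k"
         "count (beta r p') (k*x) = ee r (count p' x) div k"
      unfolding count_beta using dv k_def by simp_all
    moreover have "k dvd ee r (count p x)" "k dvd ee r (count p' x)"
      using valid_props[OF vp] valid_props[OF vp'] k_def by blast+
    ultimately show ?thesis using assms(3) by (metis dvd_div_mult_self)
  qed
  then show "count p x = count p' x"
    using valid_props[OF vp[of x]] valid_props[OF vp'[of x]] ccq[of x] by metis
qed


lemma surj_part:
  assumes mu: "\<mu> \<in> C_set n r"
  shows "\<exists>p\<in>A_set n r. beta r p = \<mu>"
proof -
  define k where "k = 2*r+1"
  have k0: "k > 0" unfolding k_def by simp
  define a where "a x = (if even x then count \<mu> x div k else count \<mu> (k*x))" for x
  define g where "g x = count \<mu> (2*x) mod k" for x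
  define f where "f x = (if x = 0 then 0 else k * a x + 2 * g x)" for x
  have gk: "g x \<le> 2*r" for x unfolding g_def k_def
    by (metis Suc_eq_plus1 less_Suc_eq_le mod_less_divisor zero_less_Suc)
  have sub: "{x. 0 < f x} \<subseteq> set_mset \<mu> \<union> (\<lambda>y. y div 2) ` set_mset \<mu> \<union> (\<lambda>y. y div k) ` set_mset \<mu>"
  proof
    fix x assume "x \<in> {x. 0 < f x}"
    then have x0: "x \<noteq> 0" and pos: "a x > 0 \<or> g x > 0" unfolding f_def by (auto split: if_splits)
    show "x \<in> set_mset \<mu> \<union> (\<lambda>y. y div 2) ` set_mset \<mu> \<union> (\<lambda>y. y div k) ` set_mset \<mu>"
    proof (cases "g x > 0")
      case True
      then have "2*x \<in># \<mu>" unfolding g_def by (metis count_greater_zero_iff gr0I mod_0)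
      moreover have "x = (2*x) div 2" by simp
      ultimately show ?thesis by blast
    next
      case False
      then have ax: "a x > 0" using pos by simp
      show ?thesis
      proof (cases "even x")
        case True
        then have "count \<mu> x > 0" using ax unfolding a_def by (metis div_0 gr0I)
        then show ?thesis by simp
      next
        case False
        then have "k*x \<in># \<mu>" using ax unfolding a_def by simp
        moreover have "x = (k*x) div k" using k0 by simp
        ultimately show ?thesis by blast
      qed
    qed
  qed
  have fin: "finite {x. 0 < f x}" by (rule finite_subset[OF sub]) simp
  define p where "p = Abs_multiset f"
  have cp: "count p = f" unfolding p_def using fin by (rule count_Abs_multiset)
  have fx: "cc r (f x) = g x \<and> ee r (f x) = k * a x \<and> valid r (f x)" if "x \<noteq> 0" for x
    using repr[OF gk[of x], of "a x"] that unfolding f_def k_def by simp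
  have valid: "valid r (count p x)" for x
    using fx[of x] unfolding cp by (cases "x = 0") (auto simp: f_def valid_def)
  have cp0: "count p 0 = 0" unfolding cp f_def by simp
  have mu0: "count \<mu> 0 = 0" using mu unfolding C_set_def partitions_def by (auto simp: not_in_iff[symmetric])
  have beq: "beta r p = \<mu>"
  proof (rule multiset_eqI)
    fix y
    show "count (beta r p) y = count \<mu> y"
    proof (cases "even y")
      case True
      show ?thesis
      proof (cases "y = 0")
        case True
        then show ?thesis using cp0 mu0 unfolding count_beta by simp
      next
        case False
        have "count (beta r p) y = ee r (f y) + cc r (f (y div 2))" unfolding count_beta cp using \<open>even y\<close> by simp
        also have "\<dots> = k * (count \<mu> y div k) + count \<mu> y mod k"
          using fx[of y] fx[of "y div 2"] False \<open>even y\<close> unfolding a_def g_def by auto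
        also have "\<dots> = count \<mu> y" by simp
        finally show ?thesis .
      qed
    next
      case False
      show ?thesis
      proof (cases "k dvd y")
        case True
        define x where "x = y div k"
        have ox: "odd x" using odd_quot[of r y] True False unfolding x_def k_def by simp
        then have x0: "x \<noteq> 0" by (metis even_zero)
        have y: "y = k * x" unfolding x_def using True by simp
        have "count (beta r p) y = ee r (f x) div k" unfolding count_beta cp using False True unfolding x_def k_def by simp
        also have "\<dots> = count \<mu> (k*x)" using fx[OF x0] ox k0 unfolding a_def by simp
        finally show ?thesis using y by simp
      next
        case nd: False
        have "y \<notin># \<mu>"
        proof
          assume "y \<in># \<mu>"
          then have "y mod (4*r+2) = 2*r+1" using False mu unfolding C_set_def by auto
          then have "y mod (2*(2*r+1)) = 2*r+1" by (simp add: algebra_simps)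
          then have "y mod (2*r+1) = 0" by (metis mod_mult2_eq  add_0 mod_mult_self1_is_0 mod_self mod_mod_cancel dvd_triv_right)
          then show False using nd unfolding k_def by auto
        qed
        then show ?thesis using nd False unfolding count_beta k_def by (simp add: not_in_iff)
      qed
    qed
  qed
  have "sum_mset p = n" using sum_beta[of r p] valid beq mu unfolding C_set_def partitions_def by auto
  moreover have "\<forall>x\<in>#p. 0 < x" using cp0 by (metis gr0I not_in_iff)
  moreover have "\<forall>x\<in>#p. odd (count p x) \<longrightarrow> 2*r+1 \<le> count p x" using valid unfolding valid_def by auto
  ultimately have "p \<in> A_set n r" unfolding A_set_def partitions_def by auto
  then show ?thesis using beq by blast
qed

theorem mainTheorem1:
  fixes r n :: nat
  assumes "1 \<le> r"
  shows "(\<forall>p\<in>A_set n r. beta_well_defined r p) \<and> bij_betw (beta r) (A_set n r) (C_set n r)"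
proof
  show "\<forall>p\<in>A_set n r. beta_well_defined r p" using wd A_valid by blast
  show "bij_betw (beta r) (A_set n r) (C_set n r)"
    unfolding bij_betw_def
  proof
    show "inj_on (beta r) (A_set n r)" by (rule inj_onI) (rule inj_part)
    show "beta r ` A_set n r = C_set n r"
      using into_C surj_part by blast
  qed
qed

end
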